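(* Let $k\geq 4$ and let $G$ be a $(P_1+P_5)$-free graph with a $P_k$-suitable pair $(u,v)$ such that $N(u)$ is an independent set. Then $G$ has a $P_k$-witness structure $\{W(p_1),\dots,W(p_k)\}$ with $W(p_1)=\{u\}$ and $W(p_k)=\{v\}$ such that $W(p_2)\setminus N(u)$ contains a set $S$ with $|S|\le 2$ for which $N(u)\cup S$ induces a connected subgraph of $G$.
   Context: Writing $P_k=p_1\cdots p_k$, a $P_k$-witness structure of $G$ is a partition $\{W(p_1),\dots,W(p_k)\}$ of $V(G)$ into nonempty sets, each inducing a connected subgraph, such that $W(p_i)$ and $W(p_j)$ are joined by an edge iff $|i-j|=1$. A pair of non-adjacent vertices $(u,v)$ is $P_k$-suitable if $G$ has such a witness structure with $W(p_1)=\{u\}$ and $W(p_k)=\{v\}$. A graph is $H$-free if it has no induced subgraph isomorphic to $H$; $+$ denotes disjoint union. *)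

theory Defs
  imports Main
begin

definition graph :: "'a set \<Rightarrow> ('a \<Rightarrow> 'a \<Rightarrow> bool) \<Rightarrow> bool" where
  "graph V E \<longleftrightarrow> finite V \<and> (\<forall>x y. E x y \<longrightarrow> x \<in> V \<and> y \<in> V)
     \<and> (\<forall>x y. E x y \<longrightarrow> E y x) \<and> (\<forall>x. \<not> E x x)"

definition nbhd :: "'a set \<Rightarrow> ('a \<Rightarrow> 'a \<Rightarrow> bool) \<Rightarrow> 'a \<Rightarrow> 'a set" where
  "nbhd V E u = {w \<in> V. E u w}"

definition independent :: "('a \<Rightarrow> 'a \<Rightarrow> bool) \<Rightarrow> 'a set \<Rightarrow> bool" where
  "independent E S \<longleftrightarrow> (\<forall>x\<in>S. \<forall>y\<in>S. \<not> E x y)"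

definition connected_set :: "('a \<Rightarrow> 'a \<Rightarrow> bool) \<Rightarrow> 'a set \<Rightarrow> bool" where
  "connected_set E S \<longleftrightarrow> S \<noteq> {} \<and>
     (\<forall>x\<in>S. \<forall>y\<in>S. (\<lambda>a b. a \<in> S \<and> b \<in> S \<and> E a b)\<^sup>*\<^sup>* x y)"

definition induced_copy ::
  "'b set \<Rightarrow> ('b \<Rightarrow> 'b \<Rightarrow> bool) \<Rightarrow> 'a set \<Rightarrow> ('a \<Rightarrow> 'a \<Rightarrow> bool) \<Rightarrow> bool" where
  "induced_copy VH EH V E \<longleftrightarrow> (\<exists>f. inj_on f VH \<and> f ` VH \<subseteq> V \<and>
     (\<forall>x\<in>VH. \<forall>y\<in>VH. EH x y \<longleftrightarrow> E (f x) (f y)))"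

definition H_free ::
  "'b set \<Rightarrow> ('b \<Rightarrow> 'b \<Rightarrow> bool) \<Rightarrow> 'a set \<Rightarrow> ('a \<Rightarrow> 'a \<Rightarrow> bool) \<Rightarrow> bool" where
  "H_free VH EH V E \<longleftrightarrow> \<not> induced_copy VH EH V E"

definition path_V :: "nat \<Rightarrow> nat set" where "path_V n = {0..<n}"
definition path_E :: "nat \<Rightarrow> nat \<Rightarrow> bool" where
  "path_E i j \<longleftrightarrow> i = Suc j \<or> j = Suc i"

definition dunion_V :: "'a set \<Rightarrow> 'b set \<Rightarrow> ('a + 'b) set" where
  "dunion_V A B = Inl ` A \<union> Inr ` B"
fun dunion_E :: "('a \<Rightarrow> 'a \<Rightarrow> bool) \<Rightarrow> ('b \<Rightarrow> 'b \<Rightarrow> bool) \<Rightarrow> 'a + 'b \<Rightarrow> 'a + 'b \<Rightarrow> bool" where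
  "dunion_E EA EB (Inl x) (Inl y) = EA x y"
| "dunion_E EA EB (Inr x) (Inr y) = EB x y"
| "dunion_E EA EB _ _ = False"

text \<open>P_k-witness structure W(p_1),...,W(p_k), indexed by 1..k.\<close>
definition witness_structure ::
  "'a set \<Rightarrow> ('a \<Rightarrow> 'a \<Rightarrow> bool) \<Rightarrow> nat \<Rightarrow> (nat \<Rightarrow> 'a set) \<Rightarrow> bool" where
  "witness_structure V E k W \<longleftrightarrow>
     (\<Union>i\<in>{1..k}. W i) = V \<and>
     (\<forall>i\<in>{1..k}. W i \<noteq> {} \<and> connected_set E (W i)) \<and>
     (\<forall>i\<in>{1..k}. \<forall>j\<in>{1..k}. i \<noteq> j \<longrightarrow> W i \<inter> W j = {}) \<and>
     (\<forall>i\<in>{1..k}. \<forall>j\<in>{1..k}. i \<noteq> j \<longrightarrow>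
        ((\<exists>x\<in>W i. \<exists>y\<in>W j. E x y) \<longleftrightarrow> (i = Suc j \<or> j = Suc i)))"

definition suitable :: "'a set \<Rightarrow> ('a \<Rightarrow> 'a \<Rightarrow> bool) \<Rightarrow> nat \<Rightarrow> 'a \<Rightarrow> 'a \<Rightarrow> bool" where
  "suitable V E k u v \<longleftrightarrow> u \<in> V \<and> v \<in> V \<and> \<not> E u v \<and>
     (\<exists>W. witness_structure V E k W \<and> W 1 = {u} \<and> W k = {v})"

end

theory Submission
  imports Defs
begin

lemma no_p5:
  assumes g: "graph V E"
    and hf: "H_free (dunion_V (path_V 1) (path_V 5)) (dunion_E path_E path_E) V E"
    and inV: "v \<in> V" "p0 \<in> V" "p1 \<in> V" "p2 \<in> V" "p3 \<in> V" "p4 \<in> V"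
    and e: "E p0 p1" "E p1 p2" "E p2 p3" "E p3 p4"
    and ne: "\<not> E p0 p2" "\<not> E p0 p3" "\<not> E p0 p4" "\<not> E p1 p3" "\<not> E p1 p4" "\<not> E p2 p4"
    and nv: "\<not> E v p0" "\<not> E v p1" "\<not> E v p2" "\<not> E v p3" "\<not> E v p4"
  shows False
proof -
  have sym: "\<And>x y. E x y \<Longrightarrow> E y x" and irr: "\<And>x. \<not> E x x"
    using g unfolding graph_def by blast+
  define f where "f = (\<lambda>z::nat+nat. case z of Inl _ \<Rightarrow> v | Inr i \<Rightarrow> [p0,p1,p2,p3,p4] ! i)"
  have VH: "dunion_V (path_V 1) (path_V 5) = {Inl 0, Inr 0, Inr 1, Inr 2, Inr 3, Inr 4}"
    unfolding dunion_V_def path_V_def by auto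
  have d: "v \<noteq> p0" "v \<noteq> p1" "v \<noteq> p2" "v \<noteq> p3" "v \<noteq> p4"
    "p0 \<noteq> p1" "p0 \<noteq> p2" "p0 \<noteq> p3" "p0 \<noteq> p4" "p1 \<noteq> p2" "p1 \<noteq> p3" "p1 \<noteq> p4"
    "p2 \<noteq> p3" "p2 \<noteq> p4" "p3 \<noteq> p4"
    using e ne nv irr sym by metis+
  have "induced_copy (dunion_V (path_V 1) (path_V 5)) (dunion_E path_E path_E) V E"
    unfolding induced_copy_def
  proof (intro exI[of _ f] conjI)
    show "inj_on f (dunion_V (path_V 1) (path_V 5))" unfolding VH f_def
      using d by (auto simp: inj_on_def)
    show "f ` dunion_V (path_V 1) (path_V 5) \<subseteq> V" unfolding VH f_def using inV by auto
    show "\<forall>x\<in>dunion_V (path_V 1) (path_V 5). \<forall>y\<in>dunion_V (path_V 1) (path_V 5).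
        dunion_E path_E path_E x y = E (f x) (f y)"
      unfolding VH f_def using e ne nv irr sym by (auto simp: path_E_def)
  qed
  then show False using hf unfolding H_free_def by blast
qed

lemma conn_nbr:
  assumes "connected_set E S" "x \<in> S" "y \<in> S" "x \<noteq> y"
  shows "\<exists>w\<in>S. E x w"
proof -
  have "(\<lambda>a b. a \<in> S \<and> b \<in> S \<and> E a b)\<^sup>*\<^sup>* x y" using assms unfolding connected_set_def by blast
  then show ?thesis using assms(4)
    by (cases rule: converse_rtranclpE) auto
qed

lemma star_conn:
  assumes sym: "\<And>x y. E x y \<Longrightarrow> E y x" and c: "c \<in> T"
    and h: "\<forall>t\<in>T. t = c \<or> E t c \<or> (\<exists>d\<in>T. E t d \<and> E d c)"
  shows "connected_set E T"
proof -
  let ?R = "\<lambda>a b. a \<in> T \<and> b \<in> T \<and> E a b"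
  have to: "?R\<^sup>*\<^sup>* t c \<and> ?R\<^sup>*\<^sup>* c t" if t: "t \<in> T" for t
  proof -
    from h t consider "t = c" | "E t c" | d where "d \<in> T" "E t d" "E d c" by blast
    then show ?thesis
    proof cases
      case 1 then show ?thesis by simp
    next
      case 2 then show ?thesis using t c sym
        by (metis (mono_tags, lifting) r_into_rtranclp)
    next
      case 3
      then have "?R t d" "?R d c" "?R c d" "?R d t" using t c sym by auto
      then have a: "?R\<^sup>*\<^sup>* t d" "?R\<^sup>*\<^sup>* d c" "?R\<^sup>*\<^sup>* c d" "?R\<^sup>*\<^sup>* d t"
        by (simp_all add: r_into_rtranclp)
      show ?thesis using rtranclp_trans[OF a(1) a(2)] rtranclp_trans[OF a(3) a(4)] by simp
    qed
  qed
  show ?thesis unfolding connected_set_def using c to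
    by (meson empty_iff rtranclp_trans)
qed

theorem lemma17:
  fixes V :: "'a set" and E :: "'a \<Rightarrow> 'a \<Rightarrow> bool" and k :: nat and u v :: 'a
  assumes "graph V E"
    and "k \<ge> 4"
    and "H_free (dunion_V (path_V 1) (path_V 5)) (dunion_E path_E path_E) V E"
    and "suitable V E k u v"
    and "independent E (nbhd V E u)"
  shows "\<exists>W. witness_structure V E k W \<and> W 1 = {u} \<and> W k = {v} \<and>
           (\<exists>S. S \<subseteq> W 2 - nbhd V E u \<and> card S \<le> 2 \<and>
                connected_set E (nbhd V E u \<union> S))"
proof -
  note g = assms(1) and hf = assms(3)
  have sym: "\<And>x y. E x y \<Longrightarrow> E y x" and irr: "\<And>x. \<not> E x x" and finV: "finite V"
    and inV: "\<And>x y. E x y \<Longrightarrow> x \<in> V \<and> y \<in> V"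
    using g unfolding graph_def by blast+
  obtain W where ws: "witness_structure V E k W" and W1: "W 1 = {u}" and Wk: "W k = {v}"
    and uV: "u \<in> V" and vV: "v \<in> V" and nuv: "\<not> E u v"
    using assms(4) unfolding suitable_def by blast
  have cov: "(\<Union>i\<in>{1..k}. W i) = V"
    and cn: "\<And>i. i\<in>{1..k} \<Longrightarrow> W i \<noteq> {} \<and> connected_set E (W i)"
    and adj: "\<And>i j. i\<in>{1..k} \<Longrightarrow> j\<in>{1..k} \<Longrightarrow> i \<noteq> j \<Longrightarrow>
        ((\<exists>x\<in>W i. \<exists>y\<in>W j. E x y) \<longleftrightarrow> (i = Suc j \<or> j = Suc i))"
    using ws unfolding witness_structure_def by blast+
  have k: "k \<ge> 4" by fact
  have two: "(2::nat) \<in> {1..k}" "(1::nat) \<in> {1..k}" "k \<in> {1..k}" using k by auto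
  define N where "N = nbhd V E u"
  have indep: "\<And>x y. x \<in> N \<Longrightarrow> y \<in> N \<Longrightarrow> \<not> E x y"
    using assms(5) unfolding N_def independent_def by blast
  have Nu: "\<And>x. x \<in> N \<longleftrightarrow> x \<in> V \<and> E u x" unfolding N_def nbhd_def by blast
  have W2V: "W 2 \<subseteq> V" using cov two by blast
  have NW2: "N \<subseteq> W 2"
  proof
    fix w assume w: "w \<in> N"
    then have wV: "w \<in> V" and euw: "E u w" using Nu by auto
    then obtain j where j: "j \<in> {1..k}" "w \<in> W j" using cov by blast
    have "j \<noteq> 1" using j W1 euw irr by auto
    moreover have "\<exists>x\<in>W 1. \<exists>y\<in>W j. E x y" using W1 j euw by blast
    ultimately have "1 = Suc j \<or> j = Suc 1" using adj[OF two(2) j(1)] by auto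
    then have "j = 2" using j by auto
    then show "w \<in> W 2" using j by simp
  qed
  have vW2: "\<And>w. w \<in> W 2 \<Longrightarrow> \<not> E v w"
  proof
    fix w assume w: "w \<in> W 2" "E v w"
    have "\<exists>x\<in>W k. \<exists>y\<in>W 2. E x y" using w Wk by blast
    then have "k = Suc 2 \<or> 2 = Suc k" using adj[OF two(3) two(1)] k by auto
    then show False using k by auto
  qed
  have vu: "\<not> E v u" using nuv sym by blast
  have Nne: "N \<noteq> {}"
  proof -
    have "\<exists>x\<in>W 1. \<exists>y\<in>W 2. E x y" using adj[OF two(2) two(1)] by auto
    then obtain y where "y \<in> W 2" "E u y" using W1 by auto
    then show ?thesis using Nu W2V by blast
  qed
  have c2: "connected_set E (W 2)" using cn two by blast
  have M_nu: "\<And>w. w \<in> W 2 - N \<Longrightarrow> \<not> E u w" using Nu W2V by blast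
  \<comment> \<open>the forbidden P5 through u\<close>
  have P5: False if "q \<in> W 2 - N" "a \<in> W 2 - N" "x \<in> N" "z \<in> N"
     "E q a" "E a x" "\<not> E q x" "\<not> E q z" "\<not> E a z" for q a x z
  proof -
    have xz: "x \<noteq> z" using that by auto
    show False
      apply (rule no_p5[OF g hf, of v q a x u z])
      using that vV uV W2V NW2 Nu indep sym vW2 vu M_nu xz by blast+
  qed
  have goal: "\<exists>S. S \<subseteq> W 2 - N \<and> card S \<le> 2 \<and> connected_set E (N \<union> S)"
  proof (cases "\<exists>x. N = {x}")
    case True
    then obtain x where "N = {x}" by blast
    then have "connected_set E (N \<union> {})" unfolding connected_set_def by auto
    then show ?thesis by (intro exI[of _ "{}"]) auto
  next
    case False
    have hasM: "\<exists>q\<in>W 2 - N. E y q" if y: "y \<in> N" for y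
    proof -
      obtain y' where "y' \<in> N" "y' \<noteq> y" using False Nne y by blast
      then obtain w where "w \<in> W 2" "E y w" using conn_nbr[OF c2, of y y'] NW2 y by blast
      then show ?thesis using indep y by blast
    qed
    define f where "f = (\<lambda>a. card {x\<in>N. E a x})"
    define A where "A = W 2 - N"
    have finA: "finite A" using finV W2V unfolding A_def by (meson finite_Diff finite_subset)
    have Ane: "A \<noteq> {}" using hasM Nne unfolding A_def by blast
    obtain a where aA: "a \<in> A" and amax: "\<And>b. b \<in> A \<Longrightarrow> f b \<le> f a"
    proof -
      have "Max (f ` A) \<in> f ` A" using finA Ane by simp
      then obtain a where "a \<in> A" "f a = Max (f ` A)" by auto
      then show ?thesis using that finA by auto
    qed
    have finN: "finite N" using finV Nu by (metis mem_Collect_eq subsetI finite_subset)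
    show ?thesis
    proof (cases "N \<subseteq> {x. E a x}")
      case True
      have "connected_set E (N \<union> {a})"
        apply (rule star_conn[OF sym, where c=a])
        using True sym by auto
      then show ?thesis using aA unfolding A_def by (intro exI[of _ "{a}"]) auto
    next
      case False
      then obtain y where y: "y \<in> N" "\<not> E a y" by blast
      obtain q where q: "q \<in> W 2 - N" "E y q" using hasM[OF y(1)] by blast
      show ?thesis
      proof (cases "\<exists>x\<in>N. E a x \<and> \<not> E q x")
        case True
        then obtain x where x: "x \<in> N" "E a x" "\<not> E q x" by blast
        have aq: "E q a"
        proof (rule ccontr)
          assume naq: "\<not> E q a"
          show False
            apply (rule no_p5[OF g hf, of v a x u y q])
            using x y q aA naq vV uV W2V NW2 Nu indep sym vW2 vu M_nu unfolding A_def
            by blast+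
        qed
        have cov2: "E q z" if z: "z \<in> N" "\<not> E a z" for z
          using P5[of q a x z] q aA x z aq unfolding A_def by blast
        have "connected_set E (N \<union> {a, q})"
          apply (rule star_conn[OF sym, where c=a])
          using cov2 aq sym by auto
        moreover have "card {a, q} \<le> 2" by (simp add: card_insert_if)
        ultimately show ?thesis using aA q unfolding A_def by (intro exI[of _ "{a,q}"]) auto
      next
        case False
        then have sub: "insert y {x\<in>N. E a x} \<subseteq> {x\<in>N. E q x}" using y q sym by auto
        have "f q > f a" unfolding f_def
          using psubset_card_mono[OF _ psubset_subset_trans[OF _ sub]] finN y by auto
        moreover have "f q \<le> f a" using amax q unfolding A_def by blast
        ultimately show ?thesis by simp
      qed
    qed
  qed
  then show ?thesis using ws W1 Wk unfolding N_def by blast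
qed

end
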